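(* Let $y\in\mathbb{R}^n$, $\lambda\ge0$, $i\in[n]$ and let $J=[j_1:j_2]\subseteq[n]$ be an interval with $i\in J$. For $a,b\in\mathbb{R}$ let $$L^{J,a,b}(\theta_J)=\frac12\sum_{j=j_1}^{j_2}(y_j-\theta_j)^2+\lambda\Big(\sum_{j=j_1}^{j_2-1}|\theta_{j+1}-\theta_j|+|\theta_{j_1}-a|+|\theta_{j_2}-b|\Big),\qquad \theta_J=(\theta_{j_1},\dots,\theta_{j_2})\in\mathbb{R}^{|J|},$$ and let $\hat\theta^{J,a,b}$ be its minimizer, with $\hat\theta^{J,a,b}_i$ its entry indexed by $i$. Then $$\sup_{a,b\in\mathbb{R}}\hat\theta^{J,a,b}_i\le\max_{I\subseteq J \text{ interval},\ i\in I}\Big(\overline{y}_I-2\lambda\frac{C_{I,J}}{|I|}\Big).$$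
   Context: An interval is $[a:b]=\{a,\dots,b\}\subseteq[n]$. $\overline{y}_I$ is the average of $y_j$, $j\in I$. For intervals $I\subseteq J=[j_1:j_2]$: $C_{I,J}=1$ if $I$ contains neither $j_1$ nor $j_2$; $C_{I,J}=-1$ if $I=J$; $C_{I,J}=0$ otherwise. *)

theory Defs
  imports Main Complex_Main
begin

text \<open>Vectors y in R^n are functions nat => real, indexed by [n] = {1..n}.
  An interval [a:b] is the set {a..b} of naturals.\<close>

definition avg :: "(nat \<Rightarrow> real) \<Rightarrow> nat set \<Rightarrow> real" where
  "avg y I = (\<Sum>j\<in>I. y j) / real (card I)"

definition CIJ :: "nat set \<Rightarrow> nat \<Rightarrow> nat \<Rightarrow> real" where
  "CIJ I j1 j2 = (if I = {j1..j2} then -1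
                  else if j1 \<notin> I \<and> j2 \<notin> I then 1 else 0)"

definition Lfun :: "(nat \<Rightarrow> real) \<Rightarrow> real \<Rightarrow> nat \<Rightarrow> nat \<Rightarrow> real \<Rightarrow> real \<Rightarrow> (nat \<Rightarrow> real) \<Rightarrow> real" where
  "Lfun y lam j1 j2 a b \<theta> =
     (1/2) * (\<Sum>j=j1..j2. (y j - \<theta> j)^2)
     + lam * ((\<Sum>j=j1..<j2. \<bar>\<theta> (j+1) - \<theta> j\<bar>) + \<bar>\<theta> j1 - a\<bar> + \<bar>\<theta> j2 - b\<bar>)"

text \<open>theta is a minimizer of L^{J,a,b} over R^{|J|} (entries outside J are irrelevant).\<close>
definition is_minimizer :: "(nat \<Rightarrow> real) \<Rightarrow> real \<Rightarrow> nat \<Rightarrow> nat \<Rightarrow> real \<Rightarrow> real \<Rightarrow> (nat \<Rightarrow> real) \<Rightarrow> bool" where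
  "is_minimizer y lam j1 j2 a b \<theta> \<longleftrightarrow>
     (\<forall>\<eta>. Lfun y lam j1 j2 a b \<theta> \<le> Lfun y lam j1 j2 a b \<eta>)"

end

theory Submission
  imports Defs
begin

lemma key:
  fixes y \<theta> :: "nat \<Rightarrow> real"
  assumes mn: "is_minimizer y lam j1 j2 a b \<theta>" and lam: "lam \<ge> 0"
    and pj: "j1 \<le> p" and pq: "p \<le> q" and qj: "q \<le> j2" and j1: "1 \<le> j1"
    and ge: "\<forall>j\<in>{p..q}. \<theta> j \<ge> m"
    and lt1: "p > j1 \<Longrightarrow> \<theta> (p-1) < m" and lt2: "q < j2 \<Longrightarrow> \<theta> (q+1) < m"
  shows "(\<Sum>j=p..q. \<theta> j - y j) \<le> lam * (2 * ((if p = j1 then 1 else 0) + (if q = j2 then 1 else 0)) - 2)"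
proof -
  define k where "k = real (card {p..q})"
  have kpos: "k > 0" using pq by (simp add: k_def)
  define S where "S = (\<Sum>j=p..q. \<theta> j - y j)"
  define E :: real where "E = (if p = j1 then 1 else 0) + (if q = j2 then 1 else 0)"
  define \<delta> where "\<delta> = min (if p > j1 then m - \<theta> (p-1) else 1) (if q < j2 then m - \<theta> (q+1) else 1)"
  have dpos: "\<delta> > 0" unfolding \<delta>_def using lt1 lt2 by auto
  have step: "S - lam * (2*E - 2) \<le> \<epsilon> * k / 2" if e0: "0 < \<epsilon>" and ed: "\<epsilon> \<le> \<delta>" for \<epsilon>
  proof -
    define \<eta> where "\<eta> = (\<lambda>j. if j \<in> {p..q} then \<theta> j - \<epsilon> else \<theta> j)"
    have Lle: "Lfun y lam j1 j2 a b \<theta> \<le> Lfun y lam j1 j2 a b \<eta>"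
      using mn unfolding is_minimizer_def by blast
    have Qp: "(y j - \<eta> j)^2 = (y j - \<theta> j)^2 + (if j \<in> {p..q} then 2*\<epsilon>*(y j - \<theta> j) + \<epsilon>^2 else 0)" for j
      unfolding \<eta>_def by (auto simp: power2_eq_square algebra_simps)
    have Q: "(\<Sum>j=j1..j2. (y j - \<eta> j)^2) = (\<Sum>j=j1..j2. (y j - \<theta> j)^2) + (\<Sum>j=p..q. 2*\<epsilon>*(y j - \<theta> j) + \<epsilon>^2)"
    proof -
      have "(\<Sum>j=j1..j2. (y j - \<eta> j)^2) = (\<Sum>j=j1..j2. (y j - \<theta> j)^2) + (\<Sum>j=j1..j2. (if j \<in> {p..q} then 2*\<epsilon>*(y j - \<theta> j) + \<epsilon>^2 else 0))"
        by (simp add: Qp sum.distrib)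
      also have "(\<Sum>j=j1..j2. (if j \<in> {p..q} then 2*\<epsilon>*(y j - \<theta> j) + \<epsilon>^2 else 0)) = (\<Sum>j=p..q. 2*\<epsilon>*(y j - \<theta> j) + \<epsilon>^2)"
      proof -
        have "{j1..j2} \<inter> {p..q} = {p..q}" using pj qj by auto
        moreover have "(\<Sum>j=j1..j2. (if j \<in> {p..q} then 2*\<epsilon>*(y j - \<theta> j) + \<epsilon>^2 else 0)) = (\<Sum>j\<in>{j1..j2} \<inter> {p..q}. 2*\<epsilon>*(y j - \<theta> j) + \<epsilon>^2)"
          by (rule sum.inter_restrict[symmetric]) simp
        ultimately show ?thesis by (metis (no_types, lifting))
      qed
      finally show ?thesis .
    qed
    have Qs: "(\<Sum>j=p..q. 2*\<epsilon>*(y j - \<theta> j) + \<epsilon>^2) = -2*\<epsilon>*S + \<epsilon>^2 * k"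
    proof -
      have "(\<Sum>j=p..q. 2*\<epsilon>*(y j - \<theta> j) + \<epsilon>^2) = 2*\<epsilon>*(\<Sum>j=p..q. (y j - \<theta> j)) + \<epsilon>^2 * k"
        unfolding k_def by (simp add: sum.distrib sum_distrib_left)
      moreover have "(\<Sum>j=p..q. (y j - \<theta> j)) = - S" unfolding S_def by (simp add: sum_subtractf)
      ultimately show ?thesis by simp
    qed
    have Tp: "\<bar>\<eta> (j+1) - \<eta> j\<bar> \<le> \<bar>\<theta> (j+1) - \<theta> j\<bar> - (if j = p - 1 then \<epsilon> else 0) - (if j = q then \<epsilon> else 0)"
      if j: "j \<in> {j1..<j2}" for j
    proof -
      consider "j = p - 1" | "j = q" | "j \<noteq> p - 1" "j \<noteq> q" by blast
      then show ?thesis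
      proof cases
        case 1
        then have "p > j1" "j \<noteq> q" "Suc j = p" using j pj pq j1 by auto
        moreover have "\<theta> p \<ge> m" using ge pq by auto
        moreover have "\<epsilon> \<le> m - \<theta> (p-1)" using ed \<open>p > j1\<close> unfolding \<delta>_def by auto
        ultimately show ?thesis using lt1 1 pq unfolding \<eta>_def by auto
      next
        case 2
        then have "q < j2" "j \<noteq> p - 1" using j pj pq j1 by auto
        moreover have "\<theta> q \<ge> m" using ge pq by auto
        moreover have "\<epsilon> \<le> m - \<theta> (q+1)" using ed \<open>q < j2\<close> unfolding \<delta>_def by auto
        ultimately show ?thesis using lt2 2 pq unfolding \<eta>_def by auto
      next
        case 3
        then have "(j+1 \<in> {p..q}) = (j \<in> {p..q})" using pj j1 by auto
        then show ?thesis using 3 unfolding \<eta>_def by auto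
      qed
    qed
    have T: "(\<Sum>j=j1..<j2. \<bar>\<eta> (j+1) - \<eta> j\<bar>) \<le> (\<Sum>j=j1..<j2. \<bar>\<theta> (j+1) - \<theta> j\<bar>)
        - (\<Sum>j=j1..<j2. (if j = p - 1 then \<epsilon> else 0)) - (\<Sum>j=j1..<j2. (if j = q then \<epsilon> else 0))"
    proof -
      have "(\<Sum>j=j1..<j2. \<bar>\<eta> (j+1) - \<eta> j\<bar>) \<le> (\<Sum>j=j1..<j2. \<bar>\<theta> (j+1) - \<theta> j\<bar> - (if j = p - 1 then \<epsilon> else 0) - (if j = q then \<epsilon> else 0))"
        by (rule sum_mono) (rule Tp)
      then show ?thesis by (simp only: sum_subtractf)
    qed
    have T1: "(\<Sum>j=j1..<j2. (if j = p - 1 then \<epsilon> else 0)) = (if p > j1 then \<epsilon> else 0)"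
      using pj pq qj j1 by (auto simp add: sum.delta')
    have T2: "(\<Sum>j=j1..<j2. (if j = q then \<epsilon> else 0)) = (if q < j2 then \<epsilon> else 0)"
      using pj pq qj by (simp add: sum.delta')
    have A: "\<bar>\<eta> j1 - a\<bar> \<le> \<bar>\<theta> j1 - a\<bar> + (if p = j1 then \<epsilon> else 0)"
      unfolding \<eta>_def using pj e0 by auto
    have B: "\<bar>\<eta> j2 - b\<bar> \<le> \<bar>\<theta> j2 - b\<bar> + (if q = j2 then \<epsilon> else 0)"
      unfolding \<eta>_def using qj e0 by auto
    have tv: "(\<Sum>j=j1..<j2. \<bar>\<eta> (j+1) - \<eta> j\<bar>) + \<bar>\<eta> j1 - a\<bar> + \<bar>\<eta> j2 - b\<bar>
       \<le> (\<Sum>j=j1..<j2. \<bar>\<theta> (j+1) - \<theta> j\<bar>) + \<bar>\<theta> j1 - a\<bar> + \<bar>\<theta> j2 - b\<bar> + \<epsilon> * (2*E - 2)"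
      using T T1 T2 A B pj qj unfolding E_def by (auto split: if_splits)
    have "Lfun y lam j1 j2 a b \<eta> \<le> Lfun y lam j1 j2 a b \<theta> + (-\<epsilon>*S + \<epsilon>^2*k/2) + lam * (\<epsilon> * (2*E - 2))"
      unfolding Lfun_def Q Qs using mult_left_mono[OF tv lam] by (simp add: algebra_simps)
    with Lle have "0 \<le> \<epsilon> * (- S + \<epsilon>*k/2 + lam * (2*E - 2))"
      by (simp add: algebra_simps power2_eq_square)
    then have "0 \<le> - S + \<epsilon>*k/2 + lam * (2*E - 2)" using e0 by (simp add: zero_le_mult_iff)
    then show ?thesis by simp
  qed
  show ?thesis
  proof (rule ccontr)
    assume "\<not> ?thesis"
    then have X: "S - lam * (2*E - 2) > 0" unfolding S_def E_def by simp
    define \<epsilon> where "\<epsilon> = min \<delta> ((S - lam * (2*E - 2)) / k)"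
    have "\<epsilon> > 0" using X kpos dpos unfolding \<epsilon>_def by auto
    from step[OF this] have "S - lam * (2*E - 2) \<le> \<epsilon> * k / 2" unfolding \<epsilon>_def by simp
    also have "\<epsilon> * k \<le> S - lam * (2*E - 2)"
      unfolding \<epsilon>_def using kpos by (simp add: min_def field_simps)
    finally show False using X by simp
  qed
qed

theorem lemma4:
  fixes y :: "nat \<Rightarrow> real" and n :: nat and lam :: real and i j1 j2 :: nat
  assumes "lam \<ge> 0"
    and "1 \<le> j1" and "j1 \<le> j2" and "j2 \<le> n"
    and "i \<in> {j1..j2}"
  shows "\<forall>a b \<theta>. is_minimizer y lam j1 j2 a b \<theta> \<longrightarrow>
           \<theta> i \<le> Max {avg y I - 2 * lam * CIJ I j1 j2 / real (card I) | I.
                         \<exists>p q. I = {p..q} \<and> I \<subseteq> {j1..j2} \<and> i \<in> I}"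
proof (intro allI impI)
  fix a b \<theta>
  assume mn: "is_minimizer y lam j1 j2 a b \<theta>"
  define m where "m = \<theta> i"
  have ij: "j1 \<le> i" "i \<le> j2" using assms(5) by auto
  define SP where "SP = {p \<in> {j1..i}. \<forall>j\<in>{p..i}. \<theta> j \<ge> m}"
  define SQ where "SQ = {q \<in> {i..j2}. \<forall>j\<in>{i..q}. \<theta> j \<ge> m}"
  define p where "p = Min SP"
  define q where "q = Max SQ"
  have iSP: "i \<in> SP" unfolding SP_def m_def using ij by simp
  have iSQ: "i \<in> SQ" unfolding SQ_def m_def using ij by simp
  have fSP: "finite SP" "SP \<noteq> {}" using iSP unfolding SP_def by (simp, blast)
  have fSQ: "finite SQ" "SQ \<noteq> {}" using iSQ unfolding SQ_def by (simp, blast)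
  have pSP: "p \<in> SP" unfolding p_def using fSP by simp
  have qSQ: "q \<in> SQ" unfolding q_def using fSQ by simp
  have pj: "j1 \<le> p" "p \<le> i" using pSP unfolding SP_def by auto
  have qj: "i \<le> q" "q \<le> j2" using qSQ unfolding SQ_def by auto
  have ge: "\<forall>j\<in>{p..q}. \<theta> j \<ge> m"
  proof
    fix j assume "j \<in> {p..q}"
    then have "j \<in> {p..i} \<or> j \<in> {i..q}" by auto
    then show "\<theta> j \<ge> m" using pSP qSQ unfolding SP_def SQ_def by blast
  qed
  have lt1: "\<theta> (p-1) < m" if "p > j1"
  proof (rule ccontr)
    assume "\<not> \<theta> (p-1) < m"
    have "\<forall>j\<in>{p-1..i}. \<theta> j \<ge> m"
    proof
      fix j assume j: "j \<in> {p-1..i}"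
      show "\<theta> j \<ge> m"
      proof (cases "j = p - 1")
        case True then show ?thesis using \<open>\<not> \<theta> (p-1) < m\<close> by simp
      next
        case False then have "j \<in> {p..i}" using j that by auto
        then show ?thesis using pSP unfolding SP_def by blast
      qed
    qed
    then have "p - 1 \<in> SP" using pj that unfolding SP_def by auto
    then have "p \<le> p - 1" unfolding p_def using fSP by simp
    then show False using that by simp
  qed
  have lt2: "\<theta> (q+1) < m" if "q < j2"
  proof (rule ccontr)
    assume "\<not> \<theta> (q+1) < m"
    have "\<forall>j\<in>{i..q+1}. \<theta> j \<ge> m"
    proof
      fix j assume j: "j \<in> {i..q+1}"
      show "\<theta> j \<ge> m"
      proof (cases "j = q + 1")
        case True then show ?thesis using \<open>\<not> \<theta> (q+1) < m\<close> by simp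
      next
        case False then have "j \<in> {i..q}" using j by auto
        then show ?thesis using qSQ unfolding SQ_def by blast
      qed
    qed
    then have "q + 1 \<in> SQ" using qj that unfolding SQ_def by auto
    then have "q + 1 \<le> q" unfolding q_def using fSQ by simp
    then show False by simp
  qed
  have K: "(\<Sum>j=p..q. \<theta> j - y j) \<le> lam * (2 * ((if p = j1 then 1 else 0) + (if q = j2 then 1 else 0)) - 2)"
    by (rule key[OF mn assms(1) pj(1) _ qj(2) assms(2) ge lt1 lt2]) (use pj qj in simp)
  define I where "I = {p..q}"
  define k where "k = real (card I)"
  have kpos: "k > 0" using pj qj unfolding k_def I_def by simp
  have "k * m \<le> (\<Sum>j\<in>I. \<theta> j)"
    using sum_mono[of I "\<lambda>_. m" \<theta>] ge unfolding k_def I_def by simp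
  with K have main: "k * m \<le> (\<Sum>j\<in>I. y j) + lam * (2 * ((if p = j1 then 1 else 0) + (if q = j2 then 1 else 0)) - 2)"
    unfolding I_def by (simp add: sum_subtractf)
  have bound: "m \<le> avg y I - 2 * lam * CIJ I j1 j2 / real (card I)"
  proof -
    have C: "CIJ I j1 j2 = 1 - ((if p = j1 then 1 else 0) + (if q = j2 then 1 else 0))"
    proof -
      have e: "I = {j1..j2} \<longleftrightarrow> p = j1 \<and> q = j2"
      proof
        assume h: "I = {j1..j2}"
        have "p \<in> I" "q \<in> I" "j1 \<in> I" "j2 \<in> I" using pj qj h unfolding I_def by auto
        then show "p = j1 \<and> q = j2" using h unfolding I_def by auto
      qed (simp add: I_def)
      have "j1 \<in> I \<longleftrightarrow> p = j1" "j2 \<in> I \<longleftrightarrow> q = j2" unfolding I_def using pj qj by auto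
      then show ?thesis unfolding CIJ_def using e by auto
    qed
    have "m \<le> ((\<Sum>j\<in>I. y j) + lam * (2 * ((if p = j1 then 1 else 0) + (if q = j2 then 1 else 0)) - 2)) / k"
      using main kpos by (simp add: field_simps)
    also have "\<dots> = avg y I - 2 * lam * CIJ I j1 j2 / real (card I)"
      unfolding avg_def C k_def[symmetric] using kpos by (simp add: field_simps)
    finally show ?thesis .
  qed
  let ?T = "{avg y I - 2 * lam * CIJ I j1 j2 / real (card I) | I.
                         \<exists>p q. I = {p..q} \<and> I \<subseteq> {j1..j2} \<and> i \<in> I}"
  have mem: "avg y I - 2 * lam * CIJ I j1 j2 / real (card I) \<in> ?T"
  proof -
    have "{p..q} \<subseteq> {j1..j2}" "i \<in> {p..q}" using pj qj by auto
    then show ?thesis unfolding I_def by blast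
  qed
  have fin: "finite ?T"
  proof -
    have "?T \<subseteq> (\<lambda>(p,q). avg y {p..q} - 2 * lam * CIJ {p..q} j1 j2 / real (card {p..q})) ` ({j1..j2} \<times> {j1..j2})"
    proof
      fix x assume "x \<in> ?T"
      then obtain p' q' where x: "x = avg y {p'..q'} - 2 * lam * CIJ {p'..q'} j1 j2 / real (card {p'..q'})"
        and s: "{p'..q'} \<subseteq> {j1..j2}" and i: "i \<in> {p'..q'}" by blast
      have "p' \<in> {j1..j2}" "q' \<in> {j1..j2}" using s i by auto
      then show "x \<in> (\<lambda>(p,q). avg y {p..q} - 2 * lam * CIJ {p..q} j1 j2 / real (card {p..q})) ` ({j1..j2} \<times> {j1..j2})"
        using x by force
    qed
    then show ?thesis by (rule finite_subset) simp
  qed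
  show "\<theta> i \<le> Max ?T"
    using bound Max_ge[OF fin mem] unfolding m_def by linarith
qed

end
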